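(* For every $\lambda,\lambda'\in\mathbf{R}$ there exists an integer $l\geq 0$ such that for every $f\in\mathcal{C}^{\lambda\text{-an}}(\mathbf{Z}_p^d,M)$, the restriction $f|_{p^l\mathbf{Z}_p^d}$ lies in $\mathcal{C}^{\lambda'\text{-an}}(p^l\mathbf{Z}_p^d,M)$, i.e. the function $\underline{x}\mapsto f(p^l\underline{x})$ lies in $\mathcal{C}^{\lambda'\text{-an}}(\mathbf{Z}_p^d,M)$.
   Context: A valuation on a ring (or module) is a map $\mathrm{val}$ to $(-\infty,\infty]$ with $\mathrm{val}(x)=\infty$ iff $x=0$, $\mathrm{val}(xy)\geq\mathrm{val}(x)+\mathrm{val}(y)$ (for modules: $\mathrm{val}(rm)\geq \mathrm{val}(r)+\mathrm{val}(m)$) and $\mathrm{val}(x+y)\geq\min(\mathrm{val}(x),\mathrm{val}(y))$. Let $R$ be a $\mathbf{Z}_p$-algebra which is a Tate ring with a valuation $\mathrm{val}_R$ such that $\mathrm{val}_R(p)>0$, and let $M$ be an $R$-module with a compatible valuation $\mathrm{val}_M$. For $\underline{y}\in\mathbf{Z}_p^d$ and $f:\mathbf{Z}_p^d\to M$ put $\Delta_{\underline{y}}(f)(\underline{x})=f(\underline{x}+\underline{y})-f(\underline{x})$. Let $1_i$ be the $i$-th standard basis vector, $\Delta_i=\Delta_{1_i}$, $\Delta^{\underline{n}}=\Delta_1^{n_1}\circ\cdots\circ\Delta_d^{n_d}$ for $\underline{n}\in\mathbf{Z}_{\geq0}^d$, and $a_{\underline{n}}(f)=\Delta^{\underline{n}}(f)(\underline{0})$,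 $|\underline{n}|=\sum_i n_i$. Let $\mathcal{C}^{\lambda\text{-an}}(\mathbf{Z}_p^d,M)$ be the set of continuous $f:\mathbf{Z}_p^d\to M$ with $\mathrm{val}_M(a_{\underline{n}}(f))-p^\lambda|\underline{n}|\to\infty$ as $|\underline{n}|\to\infty$. The space $\mathcal{C}^{\lambda'\text{-an}}(p^l\mathbf{Z}_p^d,M)$ is defined by transporting this definition along the homeomorphism $\mathbf{Z}_p^d\to p^l\mathbf{Z}_p^d$, $\underline{x}\mapsto p^l\underline{x}$. *)

theory Defs
  imports "HOL-Analysis.Analysis" "HOL-Library.Extended_Real"
begin

text \<open>An element of Z_p is represented by the sequence of its residues x k in {0..<p^k},
  compatible under reduction.\<close>

definition zp_set :: "nat \<Rightarrow> (nat \<Rightarrow> int) set" where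
  "zp_set p = {x. \<forall>k. 0 \<le> x k \<and> x k < int p ^ k \<and> x k = x (Suc k) mod (int p ^ k)}"

definition zp_of_int :: "nat \<Rightarrow> int \<Rightarrow> (nat \<Rightarrow> int)" where
  "zp_of_int p a = (\<lambda>k. a mod (int p ^ k))"

definition zp_add :: "nat \<Rightarrow> (nat \<Rightarrow> int) \<Rightarrow> (nat \<Rightarrow> int) \<Rightarrow> (nat \<Rightarrow> int)" where
  "zp_add p x y = (\<lambda>k. (x k + y k) mod (int p ^ k))"

definition zp_mul :: "nat \<Rightarrow> (nat \<Rightarrow> int) \<Rightarrow> (nat \<Rightarrow> int) \<Rightarrow> (nat \<Rightarrow> int)" where
  "zp_mul p x y = (\<lambda>k. (x k * y k) mod (int p ^ k))"

definition zpd_set :: "nat \<Rightarrow> nat \<Rightarrow> (nat \<Rightarrow> nat \<Rightarrow> int) set" where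
  "zpd_set p d = {x. (\<forall>i<d. x i \<in> zp_set p) \<and> (\<forall>i\<ge>d. x i = zp_of_int p 0)}"

definition zpd_zero :: "nat \<Rightarrow> (nat \<Rightarrow> nat \<Rightarrow> int)" where
  "zpd_zero p = (\<lambda>i. zp_of_int p 0)"

definition zpd_add :: "nat \<Rightarrow> (nat \<Rightarrow> nat \<Rightarrow> int) \<Rightarrow> (nat \<Rightarrow> nat \<Rightarrow> int) \<Rightarrow> (nat \<Rightarrow> nat \<Rightarrow> int)" where
  "zpd_add p x y = (\<lambda>i. zp_add p (x i) (y i))"

definition zpd_basis :: "nat \<Rightarrow> nat \<Rightarrow> (nat \<Rightarrow> nat \<Rightarrow> int)" where
  "zpd_basis p i = (\<lambda>j. if j = i then zp_of_int p 1 else zp_of_int p 0)"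

definition zpd_scale :: "nat \<Rightarrow> nat \<Rightarrow> (nat \<Rightarrow> nat \<Rightarrow> int) \<Rightarrow> (nat \<Rightarrow> nat \<Rightarrow> int)" where
  "zpd_scale p l x = (\<lambda>i. zp_mul p (zp_of_int p (int p ^ l)) (x i))"

definition ring_valuation :: "('r::comm_ring_1 \<Rightarrow> ereal) \<Rightarrow> bool" where
  "ring_valuation v \<longleftrightarrow>
     (\<forall>x. v x \<noteq> -\<infinity>) \<and> (\<forall>x. v x = \<infinity> \<longleftrightarrow> x = 0) \<and>
     (\<forall>x y. v (x * y) \<ge> v x + v y) \<and> (\<forall>x y. v (x + y) \<ge> min (v x) (v y))"

definition module_valuation ::
  "('r::comm_ring_1 \<Rightarrow> ereal) \<Rightarrow> ('r \<Rightarrow> 'm::ab_group_add \<Rightarrow> 'm) \<Rightarrow> ('m \<Rightarrow> ereal) \<Rightarrow> bool" where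
  "module_valuation vR sm vM \<longleftrightarrow>
     (\<forall>x. vM x \<noteq> -\<infinity>) \<and> (\<forall>x. vM x = \<infinity> \<longleftrightarrow> x = 0) \<and>
     (\<forall>r m. vM (sm r m) \<ge> vR r + vM m) \<and> (\<forall>x y. vM (x + y) \<ge> min (vM x) (vM y))"

definition zp_algebra :: "nat \<Rightarrow> ((nat \<Rightarrow> int) \<Rightarrow> 'r::comm_ring_1) \<Rightarrow> bool" where
  "zp_algebra p \<iota> \<longleftrightarrow>
     \<iota> (zp_of_int p 1) = 1 \<and>
     (\<forall>x\<in>zp_set p. \<forall>y\<in>zp_set p. \<iota> (zp_add p x y) = \<iota> x + \<iota> y \<and> \<iota> (zp_mul p x y) = \<iota> x * \<iota> y)"

text \<open>Tate ring (topology given by the valuation): R has a topologically nilpotent unit.\<close>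
definition tate_ring :: "('r::comm_ring_1 \<Rightarrow> ereal) \<Rightarrow> bool" where
  "tate_ring v \<longleftrightarrow> (\<exists>u. u dvd 1 \<and> v u > 0)"

text \<open>Continuity of f : Z_p^d \<rightarrow> M (only values on Z_p^d matter), M topologised by its valuation.\<close>
definition zpd_continuous :: "nat \<Rightarrow> nat \<Rightarrow> ('m::ab_group_add \<Rightarrow> ereal) \<Rightarrow> ((nat \<Rightarrow> nat \<Rightarrow> int) \<Rightarrow> 'm) \<Rightarrow> bool" where
  "zpd_continuous p d vM f \<longleftrightarrow>
     (\<forall>x\<in>zpd_set p d. \<forall>C::real. \<exists>n. \<forall>y\<in>zpd_set p d.
        (\<forall>i<d. y i n = x i n) \<longrightarrow> vM (f y - f x) \<ge> ereal C)"

definition zpd_Delta :: "nat \<Rightarrow> (nat \<Rightarrow> nat \<Rightarrow> int) \<Rightarrow> ((nat \<Rightarrow> nat \<Rightarrow> int) \<Rightarrow> 'm::ab_group_add)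
    \<Rightarrow> ((nat \<Rightarrow> nat \<Rightarrow> int) \<Rightarrow> 'm)" where
  "zpd_Delta p y f = (\<lambda>x. f (zpd_add p x y) - f x)"

text \<open>\<Delta>^n = \<Delta>_1^{n_1} \<circ> ... \<circ> \<Delta>_d^{n_d} (coordinates indexed 0..d-1).\<close>
definition zpd_Delta_multi :: "nat \<Rightarrow> nat \<Rightarrow> (nat \<Rightarrow> nat) \<Rightarrow> ((nat \<Rightarrow> nat \<Rightarrow> int) \<Rightarrow> 'm::ab_group_add)
    \<Rightarrow> ((nat \<Rightarrow> nat \<Rightarrow> int) \<Rightarrow> 'm)" where
  "zpd_Delta_multi p d n = foldr (\<lambda>i g. (zpd_Delta p (zpd_basis p i) ^^ n i) \<circ> g) [0..<d] id"

definition mahler_coeff :: "nat \<Rightarrow> nat \<Rightarrow> ((nat \<Rightarrow> nat \<Rightarrow> int) \<Rightarrow> 'm::ab_group_add) \<Rightarrow> (nat \<Rightarrow> nat) \<Rightarrow> 'm" where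
  "mahler_coeff p d f n = zpd_Delta_multi p d n f (zpd_zero p)"

definition multi_indices :: "nat \<Rightarrow> (nat \<Rightarrow> nat) set" where
  "multi_indices d = {n. \<forall>i\<ge>d. n i = 0}"

definition multi_abs :: "nat \<Rightarrow> (nat \<Rightarrow> nat) \<Rightarrow> nat" where
  "multi_abs d n = (\<Sum>i<d. n i)"

definition C_an :: "nat \<Rightarrow> nat \<Rightarrow> ('m::ab_group_add \<Rightarrow> ereal) \<Rightarrow> real
    \<Rightarrow> ((nat \<Rightarrow> nat \<Rightarrow> int) \<Rightarrow> 'm) set" where
  "C_an p d vM lam = {f. zpd_continuous p d vM f \<and>
     (\<forall>C::real. \<exists>N. \<forall>n\<in>multi_indices d. multi_abs d n \<ge> N \<longrightarrow>
        vM (mahler_coeff p d f n) - ereal (real p powr lam * real (multi_abs d n)) \<ge> ereal C)}"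

end

theory Submission
  imports Defs "HOL-Computational_Algebra.Primes"
begin


lemma binom_pow_dvd:
  fixes p l j :: nat
  assumes "prime p" "1 \<le> j" "j \<le> p ^ l"
  shows "\<exists>t. p ^ t \<le> j \<and> t \<le> l \<and> p ^ (l - t) dvd (p ^ l choose j)"
proof -
  have j0: "j \<noteq> 0" using assms by simp
  have nu: "\<not> is_unit p" using assms(1) not_prime_unit by blast
  obtain u where ju: "j = p ^ multiplicity p j * u" and pu: "\<not> p dvd u"
    using multiplicity_decompose'[OF j0 nu] by metis
  define t where "t = multiplicity p j"
  have u0: "u \<noteq> 0" using ju j0 by (metis mult_0_right)
  have ptj: "p ^ t \<le> j" using ju u0 j0 unfolding t_def by (metis dvd_imp_le dvd_triv_left neq0_conv)
  have p1: "p > 1" using assms(1) prime_gt_1_nat by blast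
  have tl: "t \<le> l" using ptj assms(3) p1
    by (metis le_trans power_le_imp_le_exp)
  obtain k where k: "j = Suc k" using j0 not0_implies_Suc by blast
  have "j * (p ^ l choose j) = p ^ l * ((p ^ l - 1) choose k)"
    using binomial_absorption[of k "p ^ l"] k by simp
  hence "p ^ l dvd p ^ t * (u * (p ^ l choose j))"
    using ju unfolding t_def by (metis dvd_triv_left mult.assoc)
  moreover have "p ^ l = p ^ t * p ^ (l - t)" using tl by (simp add: power_add[symmetric])
  ultimately have "p ^ (l - t) dvd u * (p ^ l choose j)"
    using p1 by (simp add: nat_mult_dvd_cancel_disj)
  moreover have "coprime (p ^ (l - t)) u"
    using pu assms(1) by (simp add: prime_imp_coprime coprime_power_left_iff)
  ultimately have "p ^ (l - t) dvd (p ^ l choose j)"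
    using coprime_dvd_mult_right_iff by blast
  thus ?thesis using ptj tl by blast
qed




definition dD :: "nat \<Rightarrow> ((nat \<Rightarrow> nat) \<Rightarrow> 'm::ab_group_add) \<Rightarrow> ((nat \<Rightarrow> nat) \<Rightarrow> 'm)" where
  "dD i \<phi> = (\<lambda>k. \<phi> (k(i := Suc (k i))) - \<phi> k)"

definition Dq :: "nat \<Rightarrow> nat \<Rightarrow> ((nat \<Rightarrow> nat) \<Rightarrow> 'm::ab_group_add) \<Rightarrow> ((nat \<Rightarrow> nat) \<Rightarrow> 'm)" where
  "Dq q i \<phi> = (\<lambda>k. \<phi> (k(i := k i + q)) - \<phi> k)"

definition opfold :: "(nat \<Rightarrow> 'a \<Rightarrow> 'a) \<Rightarrow> nat list \<Rightarrow> (nat \<Rightarrow> nat) \<Rightarrow> 'a \<Rightarrow> 'a" where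
  "opfold A xs n = foldr (\<lambda>i g. (A i ^^ n i) \<circ> g) xs id"

lemma opfold_Nil[simp]: "opfold A [] n h = h"
  by (simp add: opfold_def)

lemma opfold_Cons[simp]: "opfold A (x # xs) n h = (A x ^^ n x) (opfold A xs n h)"
  by (simp add: opfold_def)

lemma funpow_rel:
  assumes "\<And>h w. R h w \<Longrightarrow> R (A h) (B w)" "R h w"
  shows "R ((A ^^ r) h) ((B ^^ r) w)"
  using assms by (induction r) auto

lemma opfold_rel:
  assumes "\<And>i h w. i \<in> set xs \<Longrightarrow> R h w \<Longrightarrow> R (A i h) (B i w)" "R h w"
  shows "R (opfold A xs n h) (opfold B xs n w)"
  using assms
proof (induction xs arbitrary: h w)
  case Nil
  then show ?case by simp
next
  case (Cons x xs)
  have "R (opfold A xs n h) (opfold B xs n w)"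
    using Cons.IH Cons.prems by auto
  then show ?case
    using funpow_rel[of R "A x" "B x"] Cons.prems(1) by simp
qed

lemma opfold_zero: "opfold A xs (\<lambda>_. 0) h = h"
  by (induction xs) auto

lemma opfold_upd_notin: "i \<notin> set xs \<Longrightarrow> opfold A xs (n(i := v)) h = opfold A xs n h"
  by (induction xs) auto

lemma funpow_commute2:
  assumes "\<And>x. A (B x) = B (A x)"
  shows "(A ^^ r) ((B ^^ s) x) = (B ^^ s) ((A ^^ r) x)"
proof -
  have 1: "A ((B ^^ s) x) = (B ^^ s) (A x)" for x
    by (induction s) (auto simp: assms)
  show ?thesis
    by (induction r) (auto simp: 1)
qed

lemma opfold_commute:
  assumes "\<And>a b x. A a (A b x) = A b (A a x)"
  shows "opfold A xs n ((A i ^^ j) h) = (A i ^^ j) (opfold A xs n h)"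
proof (induction xs)
  case Nil
  then show ?case by simp
next
  case (Cons x xs)
  have c: "(A x ^^ n x) ((A i ^^ j) y) = (A i ^^ j) ((A x ^^ n x) y)" for y
    by (rule funpow_commute2) (rule assms)
  show ?case using Cons by (simp add: c)
qed

lemma opfold_upd_in:
  assumes "\<And>a b x. A a (A b x) = A b (A a x)"
    and "distinct xs" "i \<in> set xs"
  shows "opfold A xs (n(i := n i + j)) h = opfold A xs n ((A i ^^ j) h)"
  using assms(2,3)
proof (induction xs)
  case Nil
  then show ?case by simp
next
  case (Cons x xs)
  show ?case
  proof (cases "x = i")
    case True
    then have "i \<notin> set xs" using Cons.prems by auto
    then have e: "opfold A xs (n(i := n i + j)) h = opfold A xs n h"
      by (rule opfold_upd_notin)
    have "opfold A (x # xs) (n(i := n i + j)) h = (A i ^^ (n i + j)) (opfold A xs n h)"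
      using True e by simp
    also have "\<dots> = (A i ^^ n i) ((A i ^^ j) (opfold A xs n h))"
      by (simp add: funpow_add)
    also have "\<dots> = opfold A (x # xs) n ((A i ^^ j) h)"
      using True by (simp add: opfold_commute[where A=A, OF assms(1)])
    finally show ?thesis .
  next
    case False
    then show ?thesis using Cons by (simp add: opfold_commute[where A=A, OF assms(1)])
  qed
qed

lemma dD_comm: "dD a (dD b x) = dD b (dD a x)"
  unfolding dD_def
  by (cases "a = b") (auto simp: fun_upd_twist algebra_simps)

definition linop :: "('r::comm_ring_1 \<Rightarrow> 'm::ab_group_add \<Rightarrow> 'm) \<Rightarrow>
   (((nat \<Rightarrow> nat) \<Rightarrow> 'm) \<Rightarrow> ((nat \<Rightarrow> nat) \<Rightarrow> 'm)) \<Rightarrow> bool" where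
  "linop sm T \<longleftrightarrow> (\<forall>(J::nat set) c \<rho>. T (\<lambda>k. \<Sum>j\<in>J. sm (c j) (\<rho> j k)) = (\<lambda>k. \<Sum>j\<in>J. sm (c j) (T (\<rho> j) k)))"

lemma linop_dD:
  assumes "module sm"
  shows "linop sm (dD i)"
  unfolding linop_def dD_def
  by (auto simp: sum_subtractf module.scale_right_diff_distrib[OF assms])

lemma linop_funpow: "linop sm T \<Longrightarrow> linop sm (T ^^ r)"
  by (induction r) (auto simp: linop_def)

lemma linop_opfold: "(\<And>i. linop sm (A i)) \<Longrightarrow> linop sm (opfold A xs n)"
proof (induction xs)
  case Nil
  then show ?case by (simp add: linop_def)
next
  case (Cons x xs)
  have l1: "linop sm (A x ^^ n x)" using Cons.prems linop_funpow by blast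
  have l2: "linop sm (opfold A xs n)" using Cons by blast
  show ?case
    using l1 l2 unfolding linop_def opfold_Cons by simp
qed




lemma pascal_sum:
  assumes "module sm"
  shows "(\<Sum>j\<le>Q. sm (of_nat (Q choose j)) (a (Suc j) + a j)) =
         (\<Sum>j\<le>Suc Q. sm (of_nat (Suc Q choose j)) (a j))"
proof -
  interpret module sm by (rule assms)
  have L: "(\<Sum>j\<le>Q. sm (of_nat (Q choose j)) (a (Suc j) + a j)) =
      (\<Sum>j\<le>Q. sm (of_nat (Q choose j)) (a (Suc j))) + (\<Sum>j\<le>Q. sm (of_nat (Q choose j)) (a j))"
    by (simp add: scale_right_distrib sum.distrib)
  have A: "(\<Sum>j\<le>Q. sm (of_nat (Q choose j)) (a j)) = (\<Sum>j\<le>Suc Q. sm (of_nat (Q choose j)) (a j))"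
    by (simp add: binomial_eq_0)
  also have "\<dots> = sm (of_nat (Q choose 0)) (a 0) + (\<Sum>j\<le>Q. sm (of_nat (Q choose Suc j)) (a (Suc j)))"
    by (subst sum.atMost_Suc_shift) simp
  finally have A': "(\<Sum>j\<le>Q. sm (of_nat (Q choose j)) (a j)) = a 0 + (\<Sum>j\<le>Q. sm (of_nat (Q choose Suc j)) (a (Suc j)))"
    by simp
  have "(\<Sum>j\<le>Suc Q. sm (of_nat (Suc Q choose j)) (a j)) =
      sm (of_nat (Suc Q choose 0)) (a 0) + (\<Sum>j\<le>Q. sm (of_nat (Suc Q choose Suc j)) (a (Suc j)))"
    by (subst sum.atMost_Suc_shift) simp
  also have "\<dots> = a 0 + (\<Sum>j\<le>Q. sm (of_nat (Q choose j)) (a (Suc j)) + sm (of_nat (Q choose Suc j)) (a (Suc j)))"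
    by (simp add: scale_left_distrib)
  also have "\<dots> = a 0 + (\<Sum>j\<le>Q. sm (of_nat (Q choose j)) (a (Suc j))) + (\<Sum>j\<le>Q. sm (of_nat (Q choose Suc j)) (a (Suc j)))"
    by (simp add: sum.distrib add.assoc)
  finally show ?thesis using L A' by (simp add: algebra_simps)
qed

lemma binom_shift:
  assumes "module sm"
  shows "\<phi> (k(i := k i + Q)) = (\<Sum>j\<le>Q. sm (of_nat (Q choose j)) ((dD i ^^ j) \<phi> k))"
proof (induction Q arbitrary: k)
  case 0
  then show ?case using module.scale_one[OF assms] by simp
next
  case (Suc Q)
  define k' where "k' = k(i := Suc (k i))"
  have e: "k'(i := k' i + Q) = k(i := k i + Suc Q)" unfolding k'_def by simp
  have s: "(dD i ^^ j) \<phi> k' = (dD i ^^ Suc j) \<phi> k + (dD i ^^ j) \<phi> k" for j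
    by (simp add: dD_def k'_def)
  have "\<phi> (k(i := k i + Suc Q)) = (\<Sum>j\<le>Q. sm (of_nat (Q choose j)) ((dD i ^^ j) \<phi> k'))"
    using Suc[of k'] unfolding e .
  also have "\<dots> = (\<Sum>j\<le>Q. sm (of_nat (Q choose j)) ((dD i ^^ Suc j) \<phi> k + (dD i ^^ j) \<phi> k))"
    by (simp add: s)
  also have "\<dots> = (\<Sum>j\<le>Suc Q. sm (of_nat (Suc Q choose j)) ((dD i ^^ j) \<phi> k))"
    by (rule pascal_sum[OF assms, where a = "\<lambda>j. (dD i ^^ j) \<phi> k"])
  finally show ?case .
qed

lemma Dq_expand:
  assumes "module sm"
  shows "Dq q i \<phi> = (\<lambda>k. \<Sum>j\<in>{1..q}. sm (of_nat (q choose j)) ((dD i ^^ j) \<phi> k))"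
proof
  fix k
  have "\<phi> (k(i := k i + q)) = (\<Sum>j\<in>{0..q}. sm (of_nat (q choose j)) ((dD i ^^ j) \<phi> k))"
    using binom_shift[OF assms] atMost_atLeast0 by metis
  also have "\<dots> = sm (of_nat (q choose 0)) ((dD i ^^ 0) \<phi> k) + (\<Sum>j\<in>{1..q}. sm (of_nat (q choose j)) ((dD i ^^ j) \<phi> k))"
    by (subst sum.atLeast_Suc_atMost) auto
  also have "\<dots> = \<phi> k + (\<Sum>j\<in>{1..q}. sm (of_nat (q choose j)) ((dD i ^^ j) \<phi> k))"
    using module.scale_one[OF assms] by simp
  finally show "Dq q i \<phi> k = (\<Sum>j\<in>{1..q}. sm (of_nat (q choose j)) ((dD i ^^ j) \<phi> k))"
    unfolding Dq_def by (simp add: algebra_simps)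
qed




lemma vM_sum:
  assumes "module_valuation vR sm vM" "\<And>j. j \<in> J \<Longrightarrow> L \<le> vM (g j)"
  shows "L \<le> vM (sum g J)"
proof -
  have z: "vM 0 = \<infinity>" using assms(1) unfolding module_valuation_def by blast
  show ?thesis
  using assms(2)
proof (induction J rule: infinite_finite_induct)
  case (infinite A)
  then show ?case using z by simp
next
  case empty
  then show ?case using z by simp
next
  case (insert x F)
  have "L \<le> min (vM (g x)) (vM (sum g F))" using insert by simp
  also have "\<dots> \<le> vM (g x + sum g F)" using assms(1) by (simp add: module_valuation_def)
  finally show ?case using insert by simp
qed
qed

lemma multi_abs_upd:
  assumes "i < d"
  shows "multi_abs d (m(i := m i + j)) = multi_abs d m + j"
proof -
  have "(\<Sum>x<d. (m(i := m i + j)) x) = (\<Sum>x<d. m x + (if x = i then j else 0))"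
    by (rule sum.cong) auto
  also have "\<dots> = (\<Sum>x<d. m x) + j" using assms by (simp add: sum.distrib)
  finally show ?thesis by (simp add: multi_abs_def)
qed

lemma MI_upd: "m \<in> multi_indices d \<Longrightarrow> i < d \<Longrightarrow> m(i := m i + j) \<in> multi_indices d"
  by (auto simp: multi_indices_def)

definition Aco :: "nat \<Rightarrow> ((nat \<Rightarrow> nat) \<Rightarrow> 'm::ab_group_add) \<Rightarrow> (nat \<Rightarrow> nat) \<Rightarrow> 'm" where
  "Aco d w m = opfold dD [0..<d] m w (\<lambda>_. 0)"

lemma step:
  assumes sm: "module sm" and mv: "module_valuation vR sm vM" and id: "i < d"
    and bnd: "\<forall>m\<in>multi_indices d. ereal (c + s * real (multi_abs d m)) \<le> vM (Aco d w m)"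
    and cb: "\<forall>j\<in>{1..q}. ereal (K - s * real j) \<le> vR (of_nat (q choose j))"
  shows "\<forall>m\<in>multi_indices d. ereal (c + K + s * real (multi_abs d m)) \<le> vM (Aco d (Dq q i w) m)"
proof
  fix m assume m: "m \<in> multi_indices d"
  have lin: "linop sm (opfold dD [0..<d] m)"
    by (rule linop_opfold) (rule linop_dD[OF sm])
  have "Aco d (Dq q i w) m =
      opfold dD [0..<d] m (\<lambda>k. \<Sum>j\<in>{1..q}. sm (of_nat (q choose j)) ((dD i ^^ j) w k)) (\<lambda>_. 0)"
    unfolding Aco_def Dq_expand[OF sm] ..
  also have "\<dots> = (\<Sum>j\<in>{1..q}. sm (of_nat (q choose j)) (opfold dD [0..<d] m ((dD i ^^ j) w) (\<lambda>_. 0)))"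
    using lin unfolding linop_def by metis
  also have "\<dots> = (\<Sum>j\<in>{1..q}. sm (of_nat (q choose j)) (Aco d w (m(i := m i + j))))"
    unfolding Aco_def
    by (subst opfold_upd_in[where A=dD]) (auto simp: dD_comm id)
  finally have eq: "Aco d (Dq q i w) m = \<dots>" .
  show "ereal (c + K + s * real (multi_abs d m)) \<le> vM (Aco d (Dq q i w) m)"
    unfolding eq
  proof (rule vM_sum[OF mv])
    fix j assume j: "j \<in> {1..q}"
    have b1: "ereal (c + s * real (multi_abs d m + j)) \<le> vM (Aco d w (m(i := m i + j)))"
      using bnd MI_upd[OF m id] multi_abs_upd[OF id] by metis
    have "ereal (c + K + s * real (multi_abs d m)) =
        ereal (K - s * real j) + ereal (c + s * real (multi_abs d m + j))"
      by (simp add: algebra_simps)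
    also have "\<dots> \<le> vR (of_nat (q choose j)) + vM (Aco d w (m(i := m i + j)))"
      using cb j b1 by (intro add_mono) auto
    also have "\<dots> \<le> vM (sm (of_nat (q choose j)) (Aco d w (m(i := m i + j))))"
      using mv by (simp add: module_valuation_def)
    finally show "ereal (c + K + s * real (multi_abs d m)) \<le> vM (sm (of_nat (q choose j)) (Aco d w (m(i := m i + j))))" .
  qed
qed

lemma iter_bound:
  assumes sm: "module sm" and mv: "module_valuation vR sm vM"
    and cb: "\<forall>j\<in>{1..q}. ereal (K - s * real j) \<le> vR (of_nat (q choose j))"
    and xs: "set xs \<subseteq> {..<d}"
    and bnd: "\<forall>m\<in>multi_indices d. ereal (c + s * real (multi_abs d m)) \<le> vM (Aco d w m)"
  shows "\<forall>m\<in>multi_indices d. ereal (c + K * real (sum_list (map n xs)) + s * real (multi_abs d m))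
            \<le> vM (Aco d (opfold (Dq q) xs n w) m)"
  using xs bnd
proof (induction xs arbitrary: w c)
  case Nil
  then show ?case by simp
next
  case (Cons x xs)
  have x: "x < d" using Cons.prems by auto
  have IH: "\<forall>m\<in>multi_indices d. ereal (c + K * real (sum_list (map n xs)) + s * real (multi_abs d m))
            \<le> vM (Aco d (opfold (Dq q) xs n w) m)"
    using Cons by auto
  have pw: "\<forall>m\<in>multi_indices d. ereal (c' + K * real r + s * real (multi_abs d m))
            \<le> vM (Aco d ((Dq q x ^^ r) u) m)"
    if "\<forall>m\<in>multi_indices d. ereal (c' + s * real (multi_abs d m)) \<le> vM (Aco d u m)" for r c' u
    using that
  proof (induction r)
    case 0
    then show ?case by simp
  next
    case (Suc r)
    have "\<forall>m\<in>multi_indices d. ereal ((c' + K * real r) + K + s * real (multi_abs d m))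
            \<le> vM (Aco d (Dq q x ((Dq q x ^^ r) u)) m)"
      by (rule step[OF sm mv x _ cb]) (use Suc in auto)
    then show ?case by (simp add: algebra_simps)
  qed
  have "\<forall>m\<in>multi_indices d. ereal ((c + K * real (sum_list (map n xs))) + K * real (n x) + s * real (multi_abs d m))
            \<le> vM (Aco d ((Dq q x ^^ n x) (opfold (Dq q) xs n w)) m)"
    by (rule pw) (use IH in auto)
  then show ?case by (simp add: algebra_simps)
qed




definition pt :: "nat \<Rightarrow> nat \<Rightarrow> (nat \<Rightarrow> nat) \<Rightarrow> nat \<Rightarrow> nat \<Rightarrow> int" where
  "pt p d k = (\<lambda>i. if i < d then zp_of_int p (int (k i)) else zp_of_int p 0)"

lemma pt_add:
  assumes "i < d"
  shows "zpd_add p (pt p d k) (zpd_basis p i) = pt p d (k(i := Suc (k i)))"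
  using assms
  by (auto simp: fun_eq_iff zpd_add_def pt_def zpd_basis_def zp_add_def zp_of_int_def mod_add_eq add.commute)

lemma pt_zero: "pt p d (\<lambda>_. 0) = zpd_zero p"
  by (auto simp: fun_eq_iff pt_def zpd_zero_def)

lemma pt_scale: "zpd_scale p l (pt p d k) = pt p d (\<lambda>i. p ^ l * k i)"
  by (auto simp: fun_eq_iff pt_def zpd_scale_def zp_mul_def zp_of_int_def mod_mult_eq)

lemma mahler_pt:
  "mahler_coeff p d f n = Aco d (\<lambda>k. f (pt p d k)) n"
proof -
  have "(\<lambda>h w. \<forall>k. h (pt p d k) = w k)
      (opfold (\<lambda>i. zpd_Delta p (zpd_basis p i)) [0..<d] n f) (opfold dD [0..<d] n (\<lambda>k. f (pt p d k)))"
  proof (rule opfold_rel[where R="\<lambda>h w. \<forall>k. h (pt p d k) = w k"])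
    fix i :: nat and h :: "(nat \<Rightarrow> nat \<Rightarrow> int) \<Rightarrow> 'a" and w
    assume "i \<in> set [0..<d]" "\<forall>k. h (pt p d k) = w k"
    then show "\<forall>k. zpd_Delta p (zpd_basis p i) h (pt p d k) = dD i w k"
      by (simp add: zpd_Delta_def dD_def pt_add)
  qed simp
  then have r: "opfold (\<lambda>i. zpd_Delta p (zpd_basis p i)) [0..<d] n f (zpd_zero p) = opfold dD [0..<d] n (\<lambda>k. f (pt p d k)) (\<lambda>_. 0)"
    by (metis pt_zero)
  have eq: "zpd_Delta_multi p d n = opfold (\<lambda>i. zpd_Delta p (zpd_basis p i)) [0..<d] n"
    by (simp add: zpd_Delta_multi_def opfold_def)
  show ?thesis
    unfolding mahler_coeff_def Aco_def eq using r .
qed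

lemma scaled_Aco:
  "Aco d (\<lambda>k. w (\<lambda>i. q * k i)) n = opfold (Dq q) [0..<d] n w (\<lambda>_. 0)"
proof -
  have "(\<lambda>h w. \<forall>k. h k = w (\<lambda>i. q * k i))
      (opfold dD [0..<d] n (\<lambda>k. w (\<lambda>i. q * k i))) (opfold (Dq q) [0..<d] n w)"
  proof (rule opfold_rel[where R="\<lambda>h w. \<forall>k. h k = w (\<lambda>i. q * k i)"])
    fix i :: nat and h :: "(nat \<Rightarrow> nat) \<Rightarrow> 'a" and w' assume "i \<in> set [0..<d]" and "\<forall>k. h k = w' (\<lambda>i. q * k i)"
    moreover have "(\<lambda>ia. q * (k(i := Suc (k i))) ia) = (\<lambda>j. q * k j)(i := q * k i + q)" for k
      by (auto simp: fun_eq_iff)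
    ultimately show "\<forall>k. dD i h k = Dq q i w' (\<lambda>i. q * k i)"
      by (simp add: dD_def Dq_def)
  qed simp
  then show ?thesis unfolding Aco_def by simp
qed

lemma zp_mul_in:
  assumes "p > 0" "x \<in> zp_set p"
  shows "zp_mul p (zp_of_int p a) x \<in> zp_set p"
proof -
  have P: "(int p ^ k) > 0" for k using assms(1) by simp
  have c: "(a mod int p ^ k * x k) mod int p ^ k =
           (a mod int p ^ Suc k * x (Suc k)) mod int p ^ Suc k mod int p ^ k" for k
  proof -
    have dv: "int p ^ k dvd int p ^ Suc k" by (rule le_imp_power_dvd) simp
    have xk: "x k = x (Suc k) mod int p ^ k" using assms(2) unfolding zp_set_def by blast
    have "(a mod int p ^ k * x k) mod int p ^ k = (a * x (Suc k)) mod int p ^ k"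
      unfolding xk by (simp add: mod_mult_eq)
    also have "\<dots> = (a mod int p ^ Suc k * x (Suc k)) mod int p ^ k"
      using dv by (metis mod_mod_cancel mod_mult_left_eq)
    also have "\<dots> = (a mod int p ^ Suc k * x (Suc k)) mod int p ^ Suc k mod int p ^ k"
      using dv by (simp add: mod_mod_cancel)
    finally show ?thesis .
  qed
  show ?thesis
    unfolding zp_set_def zp_mul_def zp_of_int_def mem_Collect_eq
  proof (intro allI conjI)
    fix k
    show "0 \<le> (a mod int p ^ k * x k) mod int p ^ k" using P[of k] by (rule pos_mod_sign)
    show "(a mod int p ^ k * x k) mod int p ^ k < int p ^ k" using P[of k] by (rule pos_mod_bound)
    show "(a mod int p ^ k * x k) mod int p ^ k = (a mod int p ^ Suc k * x (Suc k)) mod int p ^ Suc k mod int p ^ k"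
      by (rule c)
  qed
qed

lemma scale_in:
  assumes "p > 0" "x \<in> zpd_set p d"
  shows "zpd_scale p l x \<in> zpd_set p d"
  using assms zp_mul_in[OF assms(1)]
  by (auto simp: zpd_set_def zpd_scale_def zp_mul_def zp_of_int_def fun_eq_iff)

lemma scale_cont:
  assumes "p > 0" "zpd_continuous p d vM f"
  shows "zpd_continuous p d vM (\<lambda>x. f (zpd_scale p l x))"
  unfolding zpd_continuous_def
proof (intro ballI allI)
  fix x C assume x: "x \<in> zpd_set p d"
  obtain n where n: "\<forall>y\<in>zpd_set p d. (\<forall>i<d. y i n = zpd_scale p l x i n) \<longrightarrow> ereal C \<le> vM (f y - f (zpd_scale p l x))"
    using assms(2) scale_in[OF assms(1) x] unfolding zpd_continuous_def by blast
  show "\<exists>n. \<forall>y\<in>zpd_set p d. (\<forall>i<d. y i n = x i n) \<longrightarrow> ereal C \<le> vM (f (zpd_scale p l y) - f (zpd_scale p l x))"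
  proof (intro exI ballI impI)
    fix y assume y: "y \<in> zpd_set p d" and e: "\<forall>i<d. y i n = x i n"
    have "\<forall>i<d. zpd_scale p l y i n = zpd_scale p l x i n"
      using e by (simp add: zpd_scale_def zp_mul_def)
    then show "ereal C \<le> vM (f (zpd_scale p l y) - f (zpd_scale p l x))"
      using n scale_in[OF assms(1) y] by blast
  qed
qed




lemma vR_nat_lb:
  assumes "ring_valuation (vR :: 'r::comm_ring_1 \<Rightarrow> ereal)"
  shows "\<exists>b::real. \<forall>n. ereal b \<le> vR (of_nat n)"
proof -
  define b where "b = (if vR 1 = \<infinity> then 0 else real_of_ereal (vR 1))"
  have ninf: "vR 1 \<noteq> -\<infinity>" using assms unfolding ring_valuation_def by blast
  have b1: "ereal b \<le> vR 1" unfolding b_def using ninf by (cases "vR 1") auto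
  have z: "vR 0 = \<infinity>" using assms unfolding ring_valuation_def by blast
  have "ereal b \<le> vR (of_nat n)" for n
  proof (induction n)
    case 0
    then show ?case using z by simp
  next
    case (Suc n)
    have "ereal b \<le> min (vR 1) (vR (of_nat n))" using Suc b1 by simp
    also have "\<dots> \<le> vR (1 + of_nat n)" using assms unfolding ring_valuation_def by blast
    finally show ?case by simp
  qed
  then show ?thesis by blast
qed

lemma vR_pow_mult:
  assumes "ring_valuation vR" "ereal v \<le> vR x" "ereal b \<le> vR y"
  shows "ereal (real a * v + b) \<le> vR (x ^ a * y)"
proof (induction a)
  case 0
  then show ?case using assms(3) by simp
next
  case (Suc a)
  have "ereal (real (Suc a) * v + b) = ereal v + ereal (real a * v + b)"
    by (simp add: algebra_simps)
  also have "\<dots> \<le> vR x + vR (x ^ a * y)" using Suc assms(2) by (intro add_mono) auto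
  also have "\<dots> \<le> vR (x * (x ^ a * y))" using assms(1) unfolding ring_valuation_def by blast
  finally show ?case by (simp add: mult.assoc)
qed

lemma finite_lb:
  assumes "finite S" "\<forall>m\<in>S. g m \<noteq> -\<infinity>"
  shows "\<exists>c::real. \<forall>m\<in>S. ereal c \<le> (g m :: ereal)"
  using assms
proof (induction S rule: finite_induct)
  case empty
  then show ?case by simp
next
  case (insert x F)
  then obtain c where c: "\<forall>m\<in>F. ereal c \<le> g m" by auto
  define c' where "c' = (if g x = \<infinity> then c else min c (real_of_ereal (g x)))"
  have "ereal c' \<le> g x" using insert.prems unfolding c'_def by (cases "g x") auto
  moreover have "c' \<le> c" unfolding c'_def by simp
  ultimately have "\<forall>m\<in>insert x F. ereal c' \<le> g m"
    using c by (auto intro: order_trans[of "ereal c'" "ereal c"])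
  then show ?case by blast
qed

lemma c0_exists:
  assumes mv: "module_valuation vR sm vM" and f: "f \<in> C_an p d vM lam"
  shows "\<exists>c0::real. \<forall>m\<in>multi_indices d.
      ereal (c0 + real p powr lam * real (multi_abs d m)) \<le> vM (mahler_coeff p d f m)"
proof -
  let ?s = "real p powr lam"
  obtain N where N: "\<forall>n\<in>multi_indices d. multi_abs d n \<ge> N \<longrightarrow>
        vM (mahler_coeff p d f n) - ereal (?s * real (multi_abs d n)) \<ge> ereal 0"
    using f unfolding C_an_def by blast
  define S where "S = {m::nat\<Rightarrow>nat. \<forall>x. (x \<in> {..<d} \<longrightarrow> m x \<in> {..<N}) \<and> (x \<notin> {..<d} \<longrightarrow> m x = 0)}"
  have fS: "finite S" unfolding S_def by (rule finite_set_of_finite_funs) auto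
  have ninf: "vM x \<noteq> -\<infinity>" for x using mv unfolding module_valuation_def by blast
  obtain c where c: "\<forall>m\<in>S. ereal c \<le> vM (mahler_coeff p d f m) - ereal (?s * real (multi_abs d m))"
  proof -
    have "\<forall>m\<in>S. vM (mahler_coeff p d f m) - ereal (?s * real (multi_abs d m)) \<noteq> -\<infinity>"
    proof
      fix m show "vM (mahler_coeff p d f m) - ereal (?s * real (multi_abs d m)) \<noteq> -\<infinity>"
        using ninf[of "mahler_coeff p d f m"] by (cases "vM (mahler_coeff p d f m)") auto
    qed
    then show ?thesis using that finite_lb[OF fS, of "\<lambda>m. vM (mahler_coeff p d f m) - ereal (?s * real (multi_abs d m))"] by blast
  qed
  define c0 where "c0 = min c 0"
  have key: "ereal c0 \<le> vM (mahler_coeff p d f m) - ereal (?s * real (multi_abs d m))"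
    if m: "m \<in> multi_indices d" for m
  proof (cases "multi_abs d m \<ge> N")
    case True
    have "ereal 0 \<le> vM (mahler_coeff p d f m) - ereal (?s * real (multi_abs d m))"
      using N m True by blast
    moreover have "ereal c0 \<le> ereal 0" by (simp add: c0_def)
    ultimately show ?thesis by (rule order_trans[rotated])
  next
    case False
    have "m x < N" if "x < d" for x
    proof -
      have "m x \<le> multi_abs d m" unfolding multi_abs_def
        using that by (intro member_le_sum) auto
      then show ?thesis using False by simp
    qed
    then have "m \<in> S" using m unfolding S_def multi_indices_def by auto
    then have "ereal c \<le> vM (mahler_coeff p d f m) - ereal (?s * real (multi_abs d m))"
      using c by blast
    moreover have "ereal c0 \<le> ereal c" by (simp add: c0_def)
    ultimately show ?thesis by (rule order_trans[rotated])
  qed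
  have "ereal (c0 + ?s * real (multi_abs d m)) \<le> vM (mahler_coeff p d f m)"
    if m: "m \<in> multi_indices d" for m
    using key[OF m] by (cases "vM (mahler_coeff p d f m)") auto
  then show ?thesis by blast
qed




theorem corollary2p7:
  fixes p d :: nat
    and valR :: "'r::comm_ring_1 \<Rightarrow> ereal"
    and sm :: "'r \<Rightarrow> 'm::ab_group_add \<Rightarrow> 'm"
    and valM :: "'m \<Rightarrow> ereal"
    and \<iota> :: "(nat \<Rightarrow> int) \<Rightarrow> 'r"
    and lam lam' :: real
  assumes "prime p"
    and "zp_algebra p \<iota>"
    and "ring_valuation valR"
    and "tate_ring valR"
    and "valR (of_nat p) > 0"
    and "module sm"
    and "module_valuation valR sm valM"
  shows "\<exists>l::nat. \<forall>f \<in> C_an p d valM lam. (\<lambda>x. f (zpd_scale p l x)) \<in> C_an p d valM lam'"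
proof -
  note rv = assms(3) and smod = assms(6) and mv = assms(7)
  have p1: "p > 1" using assms(1) prime_gt_1_nat by blast
  define s where "s = real p powr lam"
  define s' where "s' = real p powr lam'"
  have s0: "s > 0" unfolding s_def using p1 by simp
  obtain v' where v': "0 < ereal v'" "ereal v' < valR (of_nat p)"
    using ereal_dense2[OF assms(5)] by blast
  have v'0: "v' > 0" using v'(1) by simp
  obtain b where b: "\<forall>n. ereal b \<le> valR (of_nat n)" using vR_nat_lb[OF rv] by blast
  define \<mu> where "\<mu> = min v' s"
  have mu0: "\<mu> > 0" unfolding \<mu>_def using v'0 s0 by simp
  define K where "K = s' + 1"
  define l where "l = nat \<lceil>(K - b) / \<mu>\<rceil>"
  have lK: "real l * \<mu> \<ge> K - b"
  proof -
    have "real l \<ge> (K - b) / \<mu>" unfolding l_def by linarith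
    then show ?thesis using mu0 by (simp add: field_simps)
  qed
  define q where "q = p ^ l"
  have cb: "\<forall>j\<in>{1..q}. ereal (K - s * real j) \<le> valR (of_nat (q choose j))"
  proof
    fix j assume j: "j \<in> {1..q}"
    obtain t where t: "p ^ t \<le> j" "t \<le> l" "p ^ (l - t) dvd (p ^ l choose j)"
      using binom_pow_dvd[OF assms(1), of j l] j unfolding q_def by auto
    obtain c' where c': "(p ^ l choose j) = p ^ (l - t) * c'" using t(3) by blast
    have "ereal (real (l - t) * v' + b) \<le> valR (of_nat p ^ (l - t) * of_nat c')"
      by (rule vR_pow_mult[OF rv]) (use v' b in auto)
    also have "\<dots> = valR (of_nat (q choose j))" unfolding q_def c' by simp
    finally have A: "ereal (real (l - t) * v' + b) \<le> valR (of_nat (q choose j))" .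
    have tj: "real t \<le> real j"
    proof -
      have "t < 2 ^ t" by simp
      also have "(2::nat) ^ t \<le> p ^ t" using p1 by (intro power_mono) auto
      finally show ?thesis using t(1) by simp
    qed
    have "K - s * real j \<le> real (l - t) * v' + b"
    proof -
      have "real (l - t) * \<mu> \<le> real (l - t) * v'" unfolding \<mu>_def by (intro mult_left_mono) auto
      moreover have "real t * \<mu> \<le> s * real j"
      proof -
        have "real t * \<mu> \<le> real t * s" unfolding \<mu>_def by (intro mult_left_mono) auto
        also have "\<dots> \<le> s * real j" using tj s0 by (simp add: mult.commute mult_left_mono)
        finally show ?thesis .
      qed
      moreover have "real (l - t) = real l - real t" using t(2) by simp
      ultimately show ?thesis using lK by (simp add: algebra_simps)
    qed
    then show "ereal (K - s * real j) \<le> valR (of_nat (q choose j))"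
      using A by (meson ereal_less_eq(3) order_trans)
  qed
  show ?thesis
  proof (intro exI ballI)
    fix f assume f: "f \<in> C_an p d valM lam"
    let ?g = "\<lambda>x. f (zpd_scale p l x)"
    define \<phi> where "\<phi> = (\<lambda>k. f (pt p d k))"
    have cont: "zpd_continuous p d valM ?g"
      using scale_cont[of p d valM f l] p1 f unfolding C_an_def by simp
    obtain c0 where c0: "\<forall>m\<in>multi_indices d. ereal (c0 + s * real (multi_abs d m)) \<le> valM (mahler_coeff p d f m)"
      using c0_exists[OF mv f] unfolding s_def by blast
    have bnd: "\<forall>m\<in>multi_indices d. ereal (c0 + s * real (multi_abs d m)) \<le> valM (Aco d \<phi> m)"
      using c0 unfolding \<phi>_def mahler_pt by simp
    have gco: "mahler_coeff p d ?g n = opfold (Dq q) [0..<d] n \<phi> (\<lambda>_. 0)" for n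
    proof -
      have "mahler_coeff p d ?g n = Aco d (\<lambda>k. \<phi> (\<lambda>i. q * k i)) n"
        unfolding mahler_pt \<phi>_def pt_scale q_def ..
      also have "\<dots> = opfold (Dq q) [0..<d] n \<phi> (\<lambda>_. 0)" by (rule scaled_Aco)
      finally show ?thesis .
    qed
    have gb: "ereal (c0 + K * real (multi_abs d n)) \<le> valM (mahler_coeff p d ?g n)" for n
    proof -
      have ib: "\<forall>m\<in>multi_indices d. ereal (c0 + K * real (sum_list (map n [0..<d])) + s * real (multi_abs d m))
            \<le> valM (Aco d (opfold (Dq q) [0..<d] n \<phi>) m)"
        by (rule iter_bound[OF smod mv cb _ bnd]) auto
      have z: "(\<lambda>_. 0::nat) \<in> multi_indices d" by (simp add: multi_indices_def)
      have sl: "sum_list (map n [0..<d]) = multi_abs d n"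
        unfolding multi_abs_def using sum.distinct_set_conv_list[of "[0..<d]" n]
        by (simp add: atLeast0LessThan)
      have "Aco d (opfold (Dq q) [0..<d] n \<phi>) (\<lambda>_. 0) = opfold (Dq q) [0..<d] n \<phi> (\<lambda>_. 0)"
        unfolding Aco_def by (simp add: opfold_zero)
      then show ?thesis using ib[rule_format, OF z] sl gco[of n] by (simp add: multi_abs_def)
    qed
    show "?g \<in> C_an p d valM lam'"
      unfolding C_an_def mem_Collect_eq
    proof (intro conjI cont allI)
      fix C :: real
      show "\<exists>N. \<forall>n\<in>multi_indices d. N \<le> multi_abs d n \<longrightarrow>
          ereal C \<le> valM (mahler_coeff p d ?g n) - ereal (real p powr lam' * real (multi_abs d n))"
      proof (intro exI ballI impI)
        fix n assume n: "n \<in> multi_indices d" "nat \<lceil>C - c0\<rceil> \<le> multi_abs d n"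
        have r: "C \<le> c0 + K * real (multi_abs d n) - s' * real (multi_abs d n)"
          using n(2) unfolding K_def by (simp add: algebra_simps)
        have "ereal C \<le> ereal (c0 + K * real (multi_abs d n)) - ereal (s' * real (multi_abs d n))"
          using r by simp
        also have "\<dots> \<le> valM (mahler_coeff p d ?g n) - ereal (s' * real (multi_abs d n))"
          using gb[of n] by (rule ereal_minus_mono) simp
        finally show "ereal C \<le> valM (mahler_coeff p d ?g n) - ereal (real p powr lam' * real (multi_abs d n))"
          unfolding s'_def .
      qed
    qed
  qed
qed


end
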